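(* \begin{enumerate} \item For the 4-taxon tree $T_{ab|cd}$ and the 2-state GM+I model, suppose $P=\phi_T(\mathbf s)$. Then generically the parameters in $\mathbf s$ related to invariable sites can be recovered from $P$ by the following formulas: $$\delta=\frac {|A_1|+|A_2|}{|B|},\ \ \boldsymbol \pi_I=\frac 1{|A_1|+|A_2|} \left ( |A_1|,|A_2|\right ),$$ where $B=\begin{pmatrix} p_{1212} & p_{1221} \\ p_{2112} & p_{2121} \end{pmatrix}$, $$A_1=\begin{pmatrix} p_{1111} & p_{1112} & p_{1121}\\ p_{1211} & p_{1212} & p_{1221}\\ p_{2111} & p_{2112} & p_{2121} \end{pmatrix}, \ \ A_2=\begin{pmatrix} p_{1212} & p_{1221} & p_{1222}\\ p_{2112} & p_{2121} & p_{2122}\\ p_{2212} & p_{2221} & p_{2222} \end{pmatrix}.$$ \item More generally, for the $\kappa$-state GM+I model on $T_{ab|cd}$, the invariable site parameters can be recovered from a generic point in the image of the parameterization map by rational formulas of the form $$\delta=\frac {\sum_{i\in[\kappa]}|A_i|}{|B|}, \ \ \boldsymbol \pi_I=\frac 1{\sum_{i\in[\kappa]} |A_i|} \left ( |A_1|,|A_2|,\dots, |A_\kappa|\right ).$$ Here $|B|$ is any $\kappa \times \kappa$ minor of $F_{ab|cd}$ that omits all rows and columns indexed by $ii$, and $|A_i|$ is the $(\kappa+1)\times(\kappa+1)$ minor obtained by including all rows and columns chosen for $B$ and in addition the $ii$ row and $ii$ column. \end{enumerate}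
   Context: The $\kappa$-state general Markov plus invariable sites (GM+I) model on a tree $T$: with probability $\delta$ (class size parameter) a site is invariable and is assigned state $i\in[\kappa]=\{1,\dots,\kappa\}$ with probability $\pi_I(i)$, where $\boldsymbol\pi_I=(\pi_I(1),\dots,\pi_I(\kappa))$; otherwise the site evolves under the general Markov (GM) model on $T$ (a root distribution $\boldsymbol\pi_{GM}$ and a $\kappa\times\kappa$ Markov matrix $M_e$ on each edge). The parameterization map $\phi_T$ sends parameters $\mathbf s$ to the joint distribution $P$ of states at the leaves, so $P=(1-\delta)P_{GM}+\delta\,\operatorname{diag}(\boldsymbol\pi_I)$ where $P_{GM}$ is a GM joint distribution on $T$ and $\operatorname{diag}(\boldsymbol\pi_I)$ is the array with $\pi_I(i)$ at entry $(i,i,\dots,i)$ and zeros elsewhere. $T_{ab|cd}$ is the binary 4-taxon tree whose internal edge induces the split $ab|cd$; pattern frequencies are $p_{ijkl}=P(i,j,k,l)$, indexed by the states at leaves $a,b,c,d$. The flattening $F_{ab|cd}$ is the $\kappa^2\times\kappa^2$ matrix with rows indexed by the states $ij$ at $(a,b)$, columns indexed by the states $kl$ at $(c,d)$, and $(ij,kl)$ entry $p_{ijkl}$. `Generically' means for all parameters outside a proper algebraic subvariety of the parameter space. *)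

theory Defs
  imports Main Complex_Main "Jordan_Normal_Form.Determinant"
begin

text \<open>The GM model is rooted at the internal node u joining a and b; the internal edge
  is directed from u to the internal node v joining c and d. States are [kappa] = {1..kappa}.\<close>

datatype edge = Ea | Eb | Ec | Ed | Eint

datatype coord = Delta | PiI nat | PiGM nat | Mat edge nat nat

type_synonym params = "coord \<Rightarrow> real"

definition param_space :: "nat \<Rightarrow> params set" where
  "param_space \<kappa> = {s.
     0 \<le> s Delta \<and> s Delta \<le> 1
   \<and> (\<forall>i\<in>{1..\<kappa>}. 0 \<le> s (PiI i)) \<and> (\<Sum>i=1..\<kappa>. s (PiI i)) = 1
   \<and> (\<forall>i\<in>{1..\<kappa>}. 0 \<le> s (PiGM i)) \<and> (\<Sum>i=1..\<kappa>. s (PiGM i)) = 1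
   \<and> (\<forall>e. \<forall>x\<in>{1..\<kappa>}. \<forall>y\<in>{1..\<kappa>}. 0 \<le> s (Mat e x y))
   \<and> (\<forall>e. \<forall>x\<in>{1..\<kappa>}. (\<Sum>y=1..\<kappa>. s (Mat e x y)) = 1)
   \<and> (\<forall>i. i \<notin> {1..\<kappa>} \<longrightarrow> s (PiI i) = 0 \<and> s (PiGM i) = 0)
   \<and> (\<forall>e x y. (x \<notin> {1..\<kappa>} \<or> y \<notin> {1..\<kappa>}) \<longrightarrow> s (Mat e x y) = 0)}"

definition P_GM :: "nat \<Rightarrow> params \<Rightarrow> nat \<Rightarrow> nat \<Rightarrow> nat \<Rightarrow> nat \<Rightarrow> real" where
  "P_GM \<kappa> s i j k l =
     (\<Sum>x=1..\<kappa>. \<Sum>y=1..\<kappa>. s (PiGM x) * s (Mat Ea x i) * s (Mat Eb x j)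
        * s (Mat Eint x y) * s (Mat Ec y k) * s (Mat Ed y l))"

definition phi :: "nat \<Rightarrow> params \<Rightarrow> nat \<Rightarrow> nat \<Rightarrow> nat \<Rightarrow> nat \<Rightarrow> real" where
  "phi \<kappa> s i j k l =
     (1 - s Delta) * P_GM \<kappa> s i j k l
     + s Delta * (if i = j \<and> j = k \<and> k = l then s (PiI i) else 0)"

inductive poly_fun :: "(params \<Rightarrow> real) \<Rightarrow> bool" where
  pf_const: "poly_fun (\<lambda>s. c)"
| pf_var: "poly_fun (\<lambda>s. s v)"
| pf_add: "poly_fun f \<Longrightarrow> poly_fun g \<Longrightarrow> poly_fun (\<lambda>s. f s + g s)"
| pf_mult: "poly_fun f \<Longrightarrow> poly_fun g \<Longrightarrow> poly_fun (\<lambda>s. f s * g s)"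

text \<open>Q holds generically on the parameter space: outside the zero set of a polynomial
  that does not vanish identically on the parameter space (i.e. outside a proper
  algebraic subvariety).\<close>
definition generically :: "nat \<Rightarrow> (params \<Rightarrow> bool) \<Rightarrow> bool" where
  "generically \<kappa> Q \<longleftrightarrow> (\<exists>f. poly_fun f \<and> (\<exists>s\<in>param_space \<kappa>. f s \<noteq> 0)
      \<and> (\<forall>s\<in>param_space \<kappa>. f s \<noteq> 0 \<longrightarrow> Q s))"

text \<open>Minor of the flattening F_{ab|cd} of P with rows rs (states at (a,b)) and
  columns cs (states at (c,d)), taken in the listed order.\<close>
definition flat_minor :: "(nat \<Rightarrow> nat \<Rightarrow> nat \<Rightarrow> nat \<Rightarrow> real)
     \<Rightarrow> (nat \<times> nat) list \<Rightarrow> (nat \<times> nat) list \<Rightarrow> real" where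
  "flat_minor P rs cs = det (mat (length rs) (length cs)
      (\<lambda>(p, q). P (fst (rs ! p)) (snd (rs ! p)) (fst (cs ! q)) (snd (cs ! q))))"

definition offdiag_choice :: "nat \<Rightarrow> (nat \<times> nat) list \<Rightarrow> bool" where
  "offdiag_choice \<kappa> rs \<longleftrightarrow> length rs = \<kappa> \<and> distinct rs
     \<and> (\<forall>(i,j)\<in>set rs. i \<in> {1..\<kappa>} \<and> j \<in> {1..\<kappa>} \<and> i \<noteq> j)"

end

theory Submission
  imports Defs
begin


lemma det_zero_last_col:
  fixes U :: "real mat"
  assumes "U \<in> carrier_mat (Suc n) (Suc n)" "\<forall>p<Suc n. U $$ (p, n) = 0"
  shows "det U = 0"
  using laplace_expansion_column[OF assms(1), of n] assms(2) by simp

lemma det_rank_def: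
  fixes U V :: "real mat"
  assumes U: "U \<in> carrier_mat (Suc n) n" and V: "V \<in> carrier_mat n (Suc n)"
  shows "det (U * V) = 0"
proof -
  define U' where "U' = mat (Suc n) (Suc n) (\<lambda>(p,q). if q < n then U $$ (p,q) else 0)"
  define V' where "V' = mat (Suc n) (Suc n) (\<lambda>(p,q). if p < n then V $$ (p,q) else 0)"
  have U'c: "U' \<in> carrier_mat (Suc n) (Suc n)" and V'c: "V' \<in> carrier_mat (Suc n) (Suc n)"
    unfolding U'_def V'_def by auto
  have "U' * V' = U * V"
  proof (rule eq_matI)
    fix i j assume ij: "i < dim_row (U * V)" "j < dim_col (U * V)"
    have "(U' * V') $$ (i,j) = (\<Sum>k<Suc n. U' $$ (i,k) * V' $$ (k,j))"
      using ij U V U'c V'c by (simp add: scalar_prod_def atLeast0LessThan)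
    also have "\<dots> = (\<Sum>k<n. U $$ (i,k) * V $$ (k,j))"
      using ij U V by (simp add: U'_def V'_def)
    also have "\<dots> = (U * V) $$ (i,j)"
      using ij U V by (simp add: scalar_prod_def atLeast0LessThan)
    finally show "(U' * V') $$ (i,j) = (U * V) $$ (i,j)" .
  qed (use U V U'c V'c in auto)
  moreover have "det U' = 0"
    by (rule det_zero_last_col[OF U'c]) (simp add: U'_def)
  ultimately show ?thesis using det_mult[OF U'c V'c] by simp
qed

lemma det_pert:
  fixes U V M :: "real mat"
  assumes U: "U \<in> carrier_mat (Suc n) n" and V: "V \<in> carrier_mat n (Suc n)"
    and k: "k < Suc n" and M: "M \<in> carrier_mat (Suc n) (Suc n)"
    and Me: "\<forall>p<Suc n. \<forall>q<Suc n. M $$ (p,q) = (U * V) $$ (p,q) + (if p = k \<and> q = k then c else 0)"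
  shows "det M = c * det (mat_delete (U * V) k k)"
proof -
  let ?G = "U * V"
  have G: "?G \<in> carrier_mat (Suc n) (Suc n)" using U V by auto
  have del: "mat_delete M k q = mat_delete ?G k q" if q: "q < Suc n" for q
  proof (rule eq_matI)
    fix i j assume ij: "i < dim_row (mat_delete ?G k q)" "j < dim_col (mat_delete ?G k q)"
    then have ij': "i < n" "j < n" using G by auto
    have "mat_delete M k q $$ (i, j) = M $$ (if i < k then i else Suc i, if j < q then j else Suc j)"
      using ij' M by (simp add: mat_delete_def)
    also have "\<dots> = ?G $$ (if i < k then i else Suc i, if j < q then j else Suc j)"
      using Me ij' by auto
    also have "\<dots> = mat_delete ?G k q $$ (i, j)"
      using ij' G U V by (simp add: mat_delete_def)
    finally show "mat_delete M k q $$ (i, j) = mat_delete ?G k q $$ (i, j)" .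
  qed (use M G in auto)
  have "det M = (\<Sum>q<Suc n. M $$ (k,q) * cofactor M k q)"
    by (rule laplace_expansion_row[OF M k])
  also have "\<dots> = (\<Sum>q<Suc n. ?G $$ (k,q) * cofactor ?G k q + (if q = k then c * cofactor ?G k k else 0))"
    by (rule sum.cong[OF refl]) (use Me k del in \<open>auto simp: cofactor_def algebra_simps\<close>)
  also have "\<dots> = det ?G + c * cofactor ?G k k"
    using k by (simp add: sum.distrib laplace_expansion_row[OF G k])
  also have "\<dots> = c * det (mat_delete ?G k k)"
    using det_rank_def[OF U V] by (simp add: cofactor_def)
  finally show ?thesis .
qed



lemma nth_ins:
  assumes "p < Suc (length xs)" "k \<le> length xs"
  shows "(take k xs @ y # drop k xs) ! p = (if p < k then xs ! p else if p = k then y else xs ! (p - 1))"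
  using assms by (auto simp: nth_append min_def)

lemma nth_ins_idx:
  assumes "p < length xs" "k \<le> length xs"
  shows "(take k xs @ y # drop k xs) ! (if p < k then p else Suc p) = xs ! p"
  using assms by (auto simp: nth_append min_def)

lemma UV_entry:
  fixes s :: params
  assumes p: "p < N" and q: "q < N"
  shows "(mat N \<kappa> (\<lambda>(p,y). (1 - s Delta) * (\<Sum>x=1..\<kappa>. s (PiGM x) * s (Mat Ea x (fst (R p))) * s (Mat Eb x (snd (R p))) * s (Mat Eint x (Suc y))))
        * mat \<kappa> N (\<lambda>(y,q). s (Mat Ec (Suc y) (fst (C q))) * s (Mat Ed (Suc y) (snd (C q))))) $$ (p,q)
   = (1 - s Delta) * P_GM \<kappa> s (fst (R p)) (snd (R p)) (fst (C q)) (snd (C q))"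
proof -
  have "?thesis \<longleftrightarrow> (\<Sum>y<\<kappa>. ((1 - s Delta) * (\<Sum>x=1..\<kappa>. s (PiGM x) * s (Mat Ea x (fst (R p))) * s (Mat Eb x (snd (R p))) * s (Mat Eint x (Suc y))))
        * (s (Mat Ec (Suc y) (fst (C q))) * s (Mat Ed (Suc y) (snd (C q)))))
     = (1 - s Delta) * P_GM \<kappa> s (fst (R p)) (snd (R p)) (fst (C q)) (snd (C q))"
    using p q by (simp add: scalar_prod_def atLeast0LessThan)
  moreover have "(\<Sum>y<\<kappa>. ((1 - s Delta) * (\<Sum>x=1..\<kappa>. s (PiGM x) * s (Mat Ea x (fst (R p))) * s (Mat Eb x (snd (R p))) * s (Mat Eint x (Suc y))))
        * (s (Mat Ec (Suc y) (fst (C q))) * s (Mat Ed (Suc y) (snd (C q)))))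
     = (1 - s Delta) * P_GM \<kappa> s (fst (R p)) (snd (R p)) (fst (C q)) (snd (C q))"
    unfolding P_GM_def
    apply (simp only: sum.atLeast1_atMost_eq sum_distrib_left sum_distrib_right)
    apply (subst sum.swap)
    apply (rule sum.cong[OF refl])+
    by (simp add: algebra_simps sum.atLeast1_atMost_eq)
  ultimately show ?thesis by simp
qed

lemma phi_minor_insert:
  fixes s :: params
  assumes lr: "length rs = \<kappa>" and lc: "length cs = \<kappa>"
    and odr: "\<forall>(a,b)\<in>set rs. a \<noteq> b" and odc: "\<forall>(a,b)\<in>set cs. a \<noteq> b" and k: "k \<le> \<kappa>"
  shows "flat_minor (phi \<kappa> s) (take k rs @ (i,i) # drop k rs) (take k cs @ (i,i) # drop k cs)
       = s Delta * s (PiI i) * flat_minor (phi \<kappa> s) rs cs"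
proof -
  define rs' where "rs' = take k rs @ (i,i) # drop k rs"
  define cs' where "cs' = take k cs @ (i,i) # drop k cs"
  have lr': "length rs' = Suc \<kappa>" and lc': "length cs' = Suc \<kappa>"
    using lr lc k by (auto simp: rs'_def cs'_def)
  define U where "U = mat (Suc \<kappa>) \<kappa> (\<lambda>(p,y). (1 - s Delta) * (\<Sum>x=1..\<kappa>. s (PiGM x) * s (Mat Ea x (fst (rs' ! p))) * s (Mat Eb x (snd (rs' ! p))) * s (Mat Eint x (Suc y))))"
  define V where "V = mat \<kappa> (Suc \<kappa>) (\<lambda>(y,q). s (Mat Ec (Suc y) (fst (cs' ! q))) * s (Mat Ed (Suc y) (snd (cs' ! q))))"
  define M where "M = mat (Suc \<kappa>) (Suc \<kappa>) (\<lambda>(p, q). phi \<kappa> s (fst (rs' ! p)) (snd (rs' ! p)) (fst (cs' ! q)) (snd (cs' ! q)))"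
  have Uc: "U \<in> carrier_mat (Suc \<kappa>) \<kappa>" and Vc: "V \<in> carrier_mat \<kappa> (Suc \<kappa>)"
    and Mc: "M \<in> carrier_mat (Suc \<kappa>) (Suc \<kappa>)" by (auto simp: U_def V_def M_def)
  have UV: "(U * V) $$ (p,q) = (1 - s Delta) * P_GM \<kappa> s (fst (rs' ! p)) (snd (rs' ! p)) (fst (cs' ! q)) (snd (cs' ! q))"
    if "p < Suc \<kappa>" "q < Suc \<kappa>" for p q
    unfolding U_def V_def by (rule UV_entry[OF that])
  have rs'_nd: "fst (rs' ! p) \<noteq> snd (rs' ! p)" if "p < Suc \<kappa>" "p \<noteq> k" for p
  proof -
    have "rs' ! p \<in> set rs"
      using that k lr unfolding rs'_def by (auto simp: nth_ins)
    then show ?thesis using odr by auto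
  qed
  have cs'_nd: "fst (cs' ! p) \<noteq> snd (cs' ! p)" if "p < Suc \<kappa>" "p \<noteq> k" for p
  proof -
    have "cs' ! p \<in> set cs"
      using that k lc unfolding cs'_def by (auto simp: nth_ins)
    then show ?thesis using odc by auto
  qed
  have rsk: "rs' ! k = (i,i)" "cs' ! k = (i,i)" using k lr lc by (auto simp: rs'_def cs'_def nth_append)
  have Me: "\<forall>p<Suc \<kappa>. \<forall>q<Suc \<kappa>. M $$ (p,q) = (U * V) $$ (p,q) + (if p = k \<and> q = k then s Delta * s (PiI i) else 0)"
  proof (intro allI impI)
    fix p q assume pq: "p < Suc \<kappa>" "q < Suc \<kappa>"
    show "M $$ (p,q) = (U * V) $$ (p,q) + (if p = k \<and> q = k then s Delta * s (PiI i) else 0)"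
      using pq rs'_nd[OF pq(1)] cs'_nd[OF pq(2)] rsk
      by (auto simp: M_def UV phi_def)
  qed
  have "det M = s Delta * s (PiI i) * det (mat_delete (U * V) k k)"
    by (rule det_pert[OF Uc Vc _ Mc Me]) (use k in simp)
  moreover have "mat_delete (U * V) k k = mat (length rs) (length cs)
      (\<lambda>(p, q). phi \<kappa> s (fst (rs ! p)) (snd (rs ! p)) (fst (cs ! q)) (snd (cs ! q)))"
  proof (rule eq_matI)
    fix p q assume pq: "p < dim_row (mat (length rs) (length cs)
      (\<lambda>(p, q). phi \<kappa> s (fst (rs ! p)) (snd (rs ! p)) (fst (cs ! q)) (snd (cs ! q))))"
       "q < dim_col (mat (length rs) (length cs)
      (\<lambda>(p, q). phi \<kappa> s (fst (rs ! p)) (snd (rs ! p)) (fst (cs ! q)) (snd (cs ! q))))"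
    then have pq': "p < \<kappa>" "q < \<kappa>" using lr lc by auto
    have e1: "rs' ! (if p < k then p else Suc p) = rs ! p"
      unfolding rs'_def by (rule nth_ins_idx) (use pq' lr k in auto)
    have e2: "cs' ! (if q < k then q else Suc q) = cs ! q"
      unfolding cs'_def by (rule nth_ins_idx) (use pq' lc k in auto)
    have odr': "\<forall>x\<in>set rs. fst x \<noteq> snd x" using odr by auto
    have odc': "\<forall>x\<in>set cs. fst x \<noteq> snd x" using odc by auto
    have n1: "fst (rs ! p) \<noteq> snd (rs ! p)" using odr' pq' lr nth_mem[of p rs] by auto
    have n2: "fst (cs ! q) \<noteq> snd (cs ! q)" using odc' pq' lc nth_mem[of q cs] by auto
    have "mat_delete (U * V) k k $$ (p, q) = (U * V) $$ (if p < k then p else Suc p, if q < k then q else Suc q)"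
      using pq' Uc Vc by (simp add: mat_delete_def)
    also have "\<dots> = (1 - s Delta) * P_GM \<kappa> s (fst (rs ! p)) (snd (rs ! p)) (fst (cs ! q)) (snd (cs ! q))"
      using UV[of "if p < k then p else Suc p" "if q < k then q else Suc q"] pq' e1 e2 by auto
    also have "\<dots> = mat (length rs) (length cs)
      (\<lambda>(p, q). phi \<kappa> s (fst (rs ! p)) (snd (rs ! p)) (fst (cs ! q)) (snd (cs ! q))) $$ (p,q)"
      using pq' lr lc n1 by (simp add: phi_def)
    finally show "mat_delete (U * V) k k $$ (p, q) = mat (length rs) (length cs)
      (\<lambda>(p, q). phi \<kappa> s (fst (rs ! p)) (snd (rs ! p)) (fst (cs ! q)) (snd (cs ! q))) $$ (p,q)" .
  qed (use Uc Vc lr lc in auto)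
  ultimately show ?thesis
    unfolding flat_minor_def M_def rs'_def cs'_def using lr' lc' by (simp add: rs'_def cs'_def)
qed



lemma pf_sum: "finite A \<Longrightarrow> (\<And>a. a \<in> A \<Longrightarrow> poly_fun (f a)) \<Longrightarrow> poly_fun (\<lambda>s. \<Sum>a\<in>A. f a s)"
proof (induction A rule: finite_induct)
  case empty then show ?case using pf_const[of 0] by simp
next
  case (insert x F)
  then show ?case using pf_add[of "f x" "\<lambda>s. \<Sum>a\<in>F. f a s"] by simp
qed

lemma pf_prod: "finite A \<Longrightarrow> (\<And>a. a \<in> A \<Longrightarrow> poly_fun (f a)) \<Longrightarrow> poly_fun (\<lambda>s. \<Prod>a\<in>A. f a s)"
proof (induction A rule: finite_induct)
  case empty then show ?case using pf_const[of 1] by simp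
next
  case (insert x F)
  then show ?case using pf_mult[of "f x" "\<lambda>s. \<Prod>a\<in>F. f a s"] by simp
qed

lemma pf_sub: "poly_fun f \<Longrightarrow> poly_fun g \<Longrightarrow> poly_fun (\<lambda>s. f s - g s)"
proof -
  assume f: "poly_fun f" and g: "poly_fun g"
  have "poly_fun (\<lambda>s. f s + (-1) * g s)"
    by (intro pf_add pf_mult pf_const f g)
  then show ?thesis by simp
qed

lemma pf_if: "poly_fun (\<lambda>s. if b then s v else 0)"
  by (cases b) (simp_all add: pf_var pf_const)

lemma pf_P_GM: "poly_fun (\<lambda>s. P_GM \<kappa> s i j k l)"
  unfolding P_GM_def
  by (intro pf_sum pf_mult pf_var finite_atLeastAtMost)

lemma pf_phi: "poly_fun (\<lambda>s. phi \<kappa> s i j k l)"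
  unfolding phi_def
  by (intro pf_add pf_mult pf_sub pf_const pf_var pf_P_GM pf_if)

lemma pf_det:
  assumes F: "\<And>p q. poly_fun (\<lambda>s. F s p q)"
  shows "poly_fun (\<lambda>s. det (mat n m (\<lambda>(p,q). F s p q)))"
proof (cases "n = m")
  case False
  then show ?thesis using pf_const[of 0] by (simp add: det_def)
next
  case True
  have eq: "det (mat n m (\<lambda>(p,q). F s p q)) =
      (\<Sum>p\<in>{p. p permutes {0..<n}}. of_int (signof p) * (\<Prod>i=0..<n. F s i (p i)))" for s
    unfolding det_def using True
    by (auto intro!: sum.cong prod.cong simp: permutes_in_image)
  show ?thesis unfolding eq
    by (intro pf_sum pf_prod pf_mult pf_const F finite_permutations) auto
qed

lemma pf_minor: "poly_fun (\<lambda>s. flat_minor (phi \<kappa> s) rs cs)"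
  unfolding flat_minor_def
  by (rule pf_det[where F = "\<lambda>s p q. phi \<kappa> s (fst (rs ! p)) (snd (rs ! p)) (fst (cs ! q)) (snd (cs ! q))"])
     (rule pf_phi)



definition tgt :: "(nat \<times> nat) list \<Rightarrow> (nat \<times> nat) list \<Rightarrow> edge \<Rightarrow> nat \<Rightarrow> nat" where
  "tgt rs cs e x = (case e of Ea \<Rightarrow> fst (rs!(x-1)) | Eb \<Rightarrow> snd (rs!(x-1))
      | Ec \<Rightarrow> fst (cs!(x-1)) | Ed \<Rightarrow> snd (cs!(x-1)) | Eint \<Rightarrow> x)"

definition wit :: "nat \<Rightarrow> (nat \<times> nat) list \<Rightarrow> (nat \<times> nat) list \<Rightarrow> params" where
  "wit \<kappa> rs cs c = (case c of Delta \<Rightarrow> 1/2 | PiI i \<Rightarrow> (if i = 1 then 1 else 0)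
     | PiGM i \<Rightarrow> (if i \<in> {1..\<kappa>} then 1 / real \<kappa> else 0)
     | Mat e x y \<Rightarrow> (if x \<in> {1..\<kappa>} \<and> y = tgt rs cs e x then 1 else 0))"

lemma tgt_range:
  assumes "offdiag_choice \<kappa> rs" "offdiag_choice \<kappa> cs" "x \<in> {1..\<kappa>}"
  shows "tgt rs cs e x \<in> {1..\<kappa>}"
proof -
  have "rs ! (x-1) \<in> set rs" "cs ! (x-1) \<in> set cs" using assms by (auto simp: offdiag_choice_def)
  then show ?thesis using assms unfolding offdiag_choice_def tgt_def
    by (cases e; cases "rs ! (x-1)"; cases "cs ! (x-1)") auto
qed

lemma wit_param:
  assumes r: "offdiag_choice \<kappa> rs" and c: "offdiag_choice \<kappa> cs" and k: "1 \<le> \<kappa>"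
  shows "wit \<kappa> rs cs \<in> param_space \<kappa>"
proof -
  have rowsum: "(\<Sum>y=1..\<kappa>. wit \<kappa> rs cs (Mat e x y)) = 1" if x: "x \<in> {1..\<kappa>}" for e x
  proof -
    have "(\<Sum>y=1..\<kappa>. wit \<kappa> rs cs (Mat e x y)) = (\<Sum>y\<in>{1..\<kappa>}. if y = tgt rs cs e x then 1 else 0)"
      using x by (intro sum.cong) (auto simp: wit_def)
    also have "\<dots> = 1" using tgt_range[OF r c x, of e] by (simp add: sum.delta')
    finally show ?thesis .
  qed
  have pis: "(\<Sum>i=1..\<kappa>. wit \<kappa> rs cs (PiI i)) = 1"
    using k by (simp add: wit_def sum.delta')
  have pgm: "(\<Sum>i=1..\<kappa>. wit \<kappa> rs cs (PiGM i)) = 1"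
    using k by (simp add: wit_def)
  have outside: "wit \<kappa> rs cs (Mat e x y) = 0" if "x \<notin> {1..\<kappa>} \<or> y \<notin> {1..\<kappa>}" for e x y
    using that tgt_range[OF r c, of x e] by (auto simp: wit_def)
  show ?thesis unfolding param_space_def
    using rowsum pis pgm outside k by (auto simp: wit_def)
qed

lemma wit_PGM:
  assumes r: "offdiag_choice \<kappa> rs" and c: "offdiag_choice \<kappa> cs" and p: "p < \<kappa>" and q: "q < \<kappa>"
  shows "P_GM \<kappa> (wit \<kappa> rs cs) (fst (rs!p)) (snd (rs!p)) (fst (cs!q)) (snd (cs!q)) = (if p = q then 1 / real \<kappa> else 0)"
proof -
  let ?s = "wit \<kappa> rs cs"
  have lr: "length rs = \<kappa>" "distinct rs" "length cs = \<kappa>" "distinct cs"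
    using r c by (auto simp: offdiag_choice_def)
  have inner: "(\<Sum>y=1..\<kappa>. ?s (PiGM x) * ?s (Mat Ea x (fst (rs!p))) * ?s (Mat Eb x (snd (rs!p)))
        * ?s (Mat Eint x y) * ?s (Mat Ec y (fst (cs!q))) * ?s (Mat Ed y (snd (cs!q))))
      = (if rs!(x-1) = rs!p \<and> cs!(x-1) = cs!q then 1 / real \<kappa> else 0)" if x: "x \<in> {1..\<kappa>}" for x
  proof -
    have "(\<Sum>y=1..\<kappa>. ?s (PiGM x) * ?s (Mat Ea x (fst (rs!p))) * ?s (Mat Eb x (snd (rs!p)))
        * ?s (Mat Eint x y) * ?s (Mat Ec y (fst (cs!q))) * ?s (Mat Ed y (snd (cs!q))))
      = (\<Sum>y\<in>{1..\<kappa>}. if y = x then ?s (PiGM x) * ?s (Mat Ea x (fst (rs!p))) * ?s (Mat Eb x (snd (rs!p)))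
        * ?s (Mat Ec x (fst (cs!q))) * ?s (Mat Ed x (snd (cs!q))) else 0)"
      using x by (intro sum.cong) (auto simp: wit_def tgt_def)
    also have "\<dots> = ?s (PiGM x) * ?s (Mat Ea x (fst (rs!p))) * ?s (Mat Eb x (snd (rs!p)))
        * ?s (Mat Ec x (fst (cs!q))) * ?s (Mat Ed x (snd (cs!q)))"
      using x by (simp add: sum.delta')
    also have "\<dots> = (if rs!(x-1) = rs!p \<and> cs!(x-1) = cs!q then 1 / real \<kappa> else 0)"
      using x by (auto simp: wit_def tgt_def prod_eq_iff)
    finally show ?thesis .
  qed
  have "P_GM \<kappa> ?s (fst (rs!p)) (snd (rs!p)) (fst (cs!q)) (snd (cs!q))
      = (\<Sum>x=1..\<kappa>. if rs!(x-1) = rs!p \<and> cs!(x-1) = cs!q then 1 / real \<kappa> else 0)"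
    unfolding P_GM_def by (rule sum.cong[OF refl], rule inner)
  also have "\<dots> = (\<Sum>x<\<kappa>. if rs!x = rs!p \<and> cs!x = cs!q then 1 / real \<kappa> else 0)"
    by (simp add: sum.atLeast1_atMost_eq)
  also have "\<dots> = (\<Sum>x<\<kappa>. if x = p then (if p = q then 1 / real \<kappa> else 0) else 0)"
    using lr p q by (intro sum.cong) (auto simp: nth_eq_iff_index_eq)
  also have "\<dots> = (if p = q then 1 / real \<kappa> else 0)"
    using p by simp
  finally show ?thesis .
qed

lemma wit_minor:
  assumes r: "offdiag_choice \<kappa> rs" and c: "offdiag_choice \<kappa> cs" and k: "\<kappa> > 0"
  shows "wit \<kappa> rs cs Delta * flat_minor (phi \<kappa> (wit \<kappa> rs cs)) rs cs \<noteq> 0"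
proof -
  let ?s = "wit \<kappa> rs cs"
  have lr: "length rs = \<kappa>" "length cs = \<kappa>"
    using r c by (auto simp: offdiag_choice_def)
  have odr: "\<forall>x\<in>set rs. fst x \<noteq> snd x" using r by (auto simp: offdiag_choice_def)
  have eq: "mat (length rs) (length cs) (\<lambda>(p, q). phi \<kappa> ?s (fst (rs ! p)) (snd (rs ! p)) (fst (cs ! q)) (snd (cs ! q)))
     = (1 / (2 * real \<kappa>)) \<cdot>\<^sub>m 1\<^sub>m \<kappa>"
  proof (rule eq_matI)
    fix p q assume "p < dim_row ((1 / (2 * real \<kappa>)) \<cdot>\<^sub>m 1\<^sub>m \<kappa>)" "q < dim_col ((1 / (2 * real \<kappa>)) \<cdot>\<^sub>m (1\<^sub>m \<kappa> :: real mat))"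
    then have pq: "p < \<kappa>" "q < \<kappa>" by auto
    have n1: "fst (rs ! p) \<noteq> snd (rs ! p)" using odr pq lr nth_mem[of p rs] by auto
    show "mat (length rs) (length cs) (\<lambda>(p, q). phi \<kappa> ?s (fst (rs ! p)) (snd (rs ! p)) (fst (cs ! q)) (snd (cs ! q))) $$ (p,q)
      = ((1 / (2 * real \<kappa>)) \<cdot>\<^sub>m 1\<^sub>m \<kappa>) $$ (p,q)"
      using pq lr n1 wit_PGM[OF r c pq] by (simp add: phi_def wit_def)
  qed (use lr in auto)
  show ?thesis unfolding flat_minor_def eq using k by (simp add: wit_def)
qed



lemma main_generic:
  assumes r: "offdiag_choice \<kappa> rs" and c: "offdiag_choice \<kappa> cs" and k: "\<kappa> > 0"
    and Q: "\<And>s. s \<in> param_space \<kappa> \<Longrightarrow> s Delta \<noteq> 0 \<Longrightarrow> flat_minor (phi \<kappa> s) rs cs \<noteq> 0 \<Longrightarrow> R s"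
  shows "generically \<kappa> R"
  unfolding generically_def
proof (intro exI conjI)
  show "poly_fun (\<lambda>s. s Delta * flat_minor (phi \<kappa> s) rs cs)"
    by (intro pf_mult pf_var pf_minor)
  show "\<exists>s\<in>param_space \<kappa>. s Delta * flat_minor (phi \<kappa> s) rs cs \<noteq> 0"
    using wit_param[OF r c] wit_minor[OF r c k] k by auto
  show "\<forall>s\<in>param_space \<kappa>. s Delta * flat_minor (phi \<kappa> s) rs cs \<noteq> 0 \<longrightarrow> R s"
    using Q by auto
qed

lemma offdiag_facts:
  assumes "offdiag_choice \<kappa> rs"
  shows "length rs = \<kappa>" "\<forall>(a,b)\<in>set rs. a \<noteq> b"
  using assms by (auto simp: offdiag_choice_def)

lemma part2:
  assumes k2: "2 \<le> \<kappa>" and r: "offdiag_choice \<kappa> rs" and c: "offdiag_choice \<kappa> cs"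
  shows "generically \<kappa> (\<lambda>s.
           let P = phi \<kappa> s;
               B = flat_minor P rs cs;
               A = (\<lambda>i. flat_minor P (rs @ [(i,i)]) (cs @ [(i,i)]))
           in B \<noteq> 0 \<and> (\<Sum>i=1..\<kappa>. A i) \<noteq> 0
              \<and> s Delta = (\<Sum>i=1..\<kappa>. A i) / B
              \<and> (\<forall>i\<in>{1..\<kappa>}. s (PiI i) = A i / (\<Sum>i=1..\<kappa>. A i)))"
proof (rule main_generic[OF r c])
  show "\<kappa> > 0" using k2 by simp
next
  fix s assume sp: "s \<in> param_space \<kappa>" and d: "s Delta \<noteq> 0" and B: "flat_minor (phi \<kappa> s) rs cs \<noteq> 0"
  let ?B = "flat_minor (phi \<kappa> s) rs cs"
  have A: "flat_minor (phi \<kappa> s) (rs @ [(i,i)]) (cs @ [(i,i)]) = s Delta * s (PiI i) * ?B" for i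
    using phi_minor_insert[OF offdiag_facts(1)[OF r] offdiag_facts(1)[OF c] offdiag_facts(2)[OF r] offdiag_facts(2)[OF c] order_refl, of s i]
      offdiag_facts(1)[OF r] offdiag_facts(1)[OF c] by simp
  have pis: "(\<Sum>i=1..\<kappa>. s (PiI i)) = 1" using sp by (simp add: param_space_def)
  have S: "(\<Sum>i=1..\<kappa>. flat_minor (phi \<kappa> s) (rs @ [(i,i)]) (cs @ [(i,i)])) = s Delta * ?B"
  proof -
    have "(\<Sum>i=1..\<kappa>. flat_minor (phi \<kappa> s) (rs @ [(i,i)]) (cs @ [(i,i)])) = (\<Sum>i=1..\<kappa>. s (PiI i)) * (s Delta * ?B)"
      unfolding A by (subst sum_distrib_right) (rule sum.cong; simp)
    then show ?thesis using pis by simp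
  qed
  show "let P = phi \<kappa> s;
               B = flat_minor P rs cs;
               A = (\<lambda>i. flat_minor P (rs @ [(i,i)]) (cs @ [(i,i)]))
           in B \<noteq> 0 \<and> (\<Sum>i=1..\<kappa>. A i) \<noteq> 0
              \<and> s Delta = (\<Sum>i=1..\<kappa>. A i) / B
              \<and> (\<forall>i\<in>{1..\<kappa>}. s (PiI i) = A i / (\<Sum>i=1..\<kappa>. A i))"
    unfolding Let_def S using d B by (simp add: A)
qed

lemma part1:
  shows "generically 2 (\<lambda>s.
           let P = phi 2 s;
               B = flat_minor P [(1,2),(2,1)] [(1,2),(2,1)];
               A1 = flat_minor P [(1,1),(1,2),(2,1)] [(1,1),(1,2),(2,1)];
               A2 = flat_minor P [(1,2),(2,1),(2,2)] [(1,2),(2,1),(2,2)]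
           in B \<noteq> 0 \<and> A1 + A2 \<noteq> 0
              \<and> s Delta = (A1 + A2) / B
              \<and> s (PiI 1) = A1 / (A1 + A2) \<and> s (PiI 2) = A2 / (A1 + A2))"
proof -
  let ?rs = "[(1::nat,2::nat),(2,1)]"
  have r: "offdiag_choice 2 ?rs" by (simp add: offdiag_choice_def)
  show ?thesis
  proof (rule main_generic[OF r r])
    fix s assume sp: "s \<in> param_space 2" and d: "s Delta \<noteq> 0" and B: "flat_minor (phi 2 s) ?rs ?rs \<noteq> 0"
    let ?B = "flat_minor (phi 2 s) ?rs ?rs"
    have A1: "flat_minor (phi 2 s) [(1,1),(1,2),(2,1)] [(1,1),(1,2),(2,1)] = s Delta * s (PiI 1) * ?B"
      using phi_minor_insert[OF offdiag_facts(1)[OF r] offdiag_facts(1)[OF r] offdiag_facts(2)[OF r] offdiag_facts(2)[OF r], of 0 s 1]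
      by simp
    have A2: "flat_minor (phi 2 s) [(1,2),(2,1),(2,2)] [(1,2),(2,1),(2,2)] = s Delta * s (PiI 2) * ?B"
      using phi_minor_insert[OF offdiag_facts(1)[OF r] offdiag_facts(1)[OF r] offdiag_facts(2)[OF r] offdiag_facts(2)[OF r], of 2 s 2]
      by simp
    have pis: "s (PiI 1) + s (PiI 2) = 1" using sp by (simp add: param_space_def eval_nat_numeral)
    have S: "s Delta * s (PiI 1) * ?B + s Delta * s (PiI 2) * ?B = s Delta * ?B"
    proof -
      have "s Delta * s (PiI 1) * ?B + s Delta * s (PiI 2) * ?B = (s (PiI 1) + s (PiI 2)) * (s Delta * ?B)"
        by (simp add: algebra_simps)
      then show ?thesis using pis by simp
    qed
    show "let P = phi 2 s;
               B = flat_minor P [(1,2),(2,1)] [(1,2),(2,1)];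
               A1 = flat_minor P [(1,1),(1,2),(2,1)] [(1,1),(1,2),(2,1)];
               A2 = flat_minor P [(1,2),(2,1),(2,2)] [(1,2),(2,1),(2,2)]
           in B \<noteq> 0 \<and> A1 + A2 \<noteq> 0
              \<and> s Delta = (A1 + A2) / B
              \<and> s (PiI 1) = A1 / (A1 + A2) \<and> s (PiI 2) = A2 / (A1 + A2)"
      unfolding Let_def A1 A2 S using d B by simp
  qed simp
qed


theorem proposition12:
  shows "generically 2 (\<lambda>s.
           let P = phi 2 s;
               B = flat_minor P [(1,2),(2,1)] [(1,2),(2,1)];
               A1 = flat_minor P [(1,1),(1,2),(2,1)] [(1,1),(1,2),(2,1)];
               A2 = flat_minor P [(1,2),(2,1),(2,2)] [(1,2),(2,1),(2,2)]
           in B \<noteq> 0 \<and> A1 + A2 \<noteq> 0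
              \<and> s Delta = (A1 + A2) / B
              \<and> s (PiI 1) = A1 / (A1 + A2) \<and> s (PiI 2) = A2 / (A1 + A2))
    \<and> (\<forall>\<kappa>::nat. \<forall>rs cs. 2 \<le> \<kappa> \<longrightarrow> offdiag_choice \<kappa> rs \<longrightarrow> offdiag_choice \<kappa> cs \<longrightarrow>
         generically \<kappa> (\<lambda>s.
           let P = phi \<kappa> s;
               B = flat_minor P rs cs;
               A = (\<lambda>i. flat_minor P (rs @ [(i,i)]) (cs @ [(i,i)]))
           in B \<noteq> 0 \<and> (\<Sum>i=1..\<kappa>. A i) \<noteq> 0
              \<and> s Delta = (\<Sum>i=1..\<kappa>. A i) / B
              \<and> (\<forall>i\<in>{1..\<kappa>}. s (PiI i) = A i / (\<Sum>i=1..\<kappa>. A i))))"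
  using part1 part2 by blast

end
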